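(* Assume $b\ne0$ and $H(x)\to\infty$ as $x\to\infty$, where $H(x)=\frac1{|b|}\int_{e^{-x}}^1\frac{\Phi(u)}{u}\,\mathrm{d}u$. Let $\bar\nu(u)=\nu([u,\infty))$ for $u\ge0$. Then $$H(x)\sim\frac1{|b|}\int_1^{e^x}\frac{\bar\nu(u)}{u}\,\mathrm{d}u\quad\text{as }x\to\infty.$$ Moreover, $H'(x)=\Phi(e^{-x})/|b|$ for all $x\ge0$, and if $u\mapsto\bar\nu(u)$ is slowly varying at $\infty$, then $H'(x)\sim\bar\nu(e^x)/|b|$ as $x\to\infty$.
   Context: Let $b\in\mathbb R$, $\beta\ge 0$, and let $\nu$ be a $\sigma$-finite measure on $(0,\infty)$ with $\int_0^\infty(1\wedge z)\nu(\mathrm{d}z)<\infty$; $\Phi(q)=\beta q+\int_0^\infty(1-e^{-qu})\nu(\mathrm{d}u)$, $q\ge0$, with $\Phi(q)>0$ for $q>0$. Here $b=\Psi'(0+)$ is the drift parameter of a branching mechanism $\Psi(q)=bq+\frac12\sigma^2q^2+\int_0^\infty(e^{-qu}-1+qu)\pi(\mathrm{d}u)$ (with $\sigma\ge0$, $\int_0^\infty(z\wedge z^2)\pi(\mathrm{d}z)<\infty$). A function $R$ is slowly varying at $\infty$ if $R(\lambda x)/R(x)\to1$ as $x\to\infty$ for every $\lambda>0$. *)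

theory Defs
  imports "HOL-Analysis.Analysis" "HOL-Library.Landau_Symbols"
begin

definition Phi :: "real \<Rightarrow> real measure \<Rightarrow> real \<Rightarrow> real" where
  "Phi \<beta> \<nu> q = \<beta> * q + (\<integral>u. (1 - exp (- q * u)) \<partial>\<nu>)"

definition nubar :: "real measure \<Rightarrow> real \<Rightarrow> real" where
  "nubar \<nu> u = measure \<nu> {u..}"

definition Hfun :: "real \<Rightarrow> real \<Rightarrow> real measure \<Rightarrow> real \<Rightarrow> real" where
  "Hfun b \<beta> \<nu> x = (1 / \<bar>b\<bar>) * (LBINT u=exp (- x)..1. Phi \<beta> \<nu> u / u)"

definition slowly_varying :: "(real \<Rightarrow> real) \<Rightarrow> bool" where
  "slowly_varying R \<longleftrightarrow> (\<forall>c>0. ((\<lambda>x. R (c * x) / R x) \<longlongrightarrow> 1) at_top)"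

end

theory Submission
  imports Defs
begin

locale nuctx =
  fixes \<beta> :: real and \<nu> :: "real measure"
  assumes beta_nonneg: "\<beta> \<ge> 0"
    and nu_sets[measurable_cong]: "sets \<nu> = sets borel"
    and nu_support: "emeasure \<nu> {..0} = 0"
    and nu_int: "(\<integral>\<^sup>+ z. ennreal (min 1 z) \<partial>\<nu>) < \<infinity>"
begin

lemma space_nu[simp]: "space \<nu> = UNIV"
  using sets_eq_imp_space_eq[OF nu_sets] by simp

lemma AE_pos: "AE z in \<nu>. z > 0"
proof (rule AE_I')
  show "{..0} \<in> null_sets \<nu>" using nu_support nu_sets by (auto simp: null_sets_def)
  show "{x \<in> space \<nu>. \<not> 0 < x} \<subseteq> {..0}" by auto
qed

lemma int_min1: "integrable \<nu> (\<lambda>z. min 1 z)"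
proof (rule integrableI_nonneg)
  show "(\<lambda>z. min 1 z) \<in> borel_measurable \<nu>" by measurable
  show "AE x in \<nu>. 0 \<le> min 1 x" using AE_pos by eventually_elim auto
  show "(\<integral>\<^sup>+ z. ennreal (min 1 z) \<partial>\<nu>) < \<infinity>" by (rule nu_int)
qed

lemma int_bound:
  assumes "f \<in> borel_measurable borel" "\<And>z. z > 0 \<Longrightarrow> \<bar>f z\<bar> \<le> C * min 1 z"
  shows "integrable \<nu> f"
proof (rule Bochner_Integration.integrable_bound[OF integrable_mult_right[OF int_min1, of C]])
  show "f \<in> borel_measurable \<nu>" using assms(1) by measurable
  show "AE x in \<nu>. norm (f x) \<le> norm (C * min 1 x)" using AE_pos
    by eventually_elim (metis assms(2) abs_ge_self order_trans real_norm_def)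
qed

definition Dn :: "real \<Rightarrow> real" where
  "Dn q = (\<integral>u. (1 - exp (- q * u)) \<partial>\<nu>)"

lemma Phi_eq: "Phi \<beta> \<nu> q = \<beta> * q + Dn q"
  by (simp add: Phi_def Dn_def)

lemma one_minus_exp_le: "1 - exp (- y) \<le> (y::real)"
  using exp_ge_add_one_self[of "-y"] by linarith

lemma one_minus_exp_bound:
  fixes q z :: real
  assumes "q \<ge> 0" "z > 0"
  shows "\<bar>1 - exp (- q * z)\<bar> \<le> max 1 q * min 1 z"
proof -
  have "q * z \<ge> 0" by (metis assms less_imp_le mult_nonneg_nonneg)
  then have a: "0 \<le> 1 - exp (- q * z)" by simp
  have b: "1 - exp (- q * z) \<le> 1" by simp
  have c: "1 - exp (- q * z) \<le> q * z" using one_minus_exp_le[of "q*z"] by simp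
  show ?thesis
  proof (cases "z \<le> 1")
    case True
    then have "q * z \<le> max 1 q * z" using assms by (intro mult_right_mono) auto
    then show ?thesis using a c True by auto
  next
    case False
    then have "min 1 z = 1" by simp
    then show ?thesis using a by (simp add: le_max_iff_disj)
  qed
qed

lemma int_D: "q \<ge> 0 \<Longrightarrow> integrable \<nu> (\<lambda>u. 1 - exp (- q * u))"
  by (rule int_bound[where C="max 1 q"]) (use one_minus_exp_bound in force)+

lemma D_nonneg: "q \<ge> 0 \<Longrightarrow> Dn q \<ge> 0"
  unfolding Dn_def by (rule integral_nonneg_AE) (use AE_pos in \<open>eventually_elim, auto simp: mult_nonneg_nonneg\<close>)

lemma D_mono: "0 \<le> p \<Longrightarrow> p \<le> q \<Longrightarrow> Dn p \<le> Dn q"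
  unfolding Dn_def
proof (rule integral_mono_AE[OF int_D int_D])
  assume h: "0 \<le> p" "p \<le> q"
  show "AE x in \<nu>. 1 - exp (- p * x) \<le> 1 - exp (- q * x)"
    using AE_pos by eventually_elim (use h in \<open>auto intro: mult_right_mono\<close>)
qed auto

lemma exp_diff_bound:
  fixes a p q z :: real
  assumes "0 < a" "a \<le> p" "p \<le> q" "z > 0"
  shows "\<bar>(1 - exp (- q * z)) - (1 - exp (- p * z))\<bar> \<le> (q - p) * (max 1 (1/a) * min 1 z)"
proof -
  have "exp (- p * z) * exp (- ((q - p) * z)) = exp (- p * z + - ((q - p) * z))" by (rule mult_exp_exp)
  also have "- p * z + - ((q - p) * z) = - q * z" by algebra
  finally have e0: "exp (- p * z) * exp (- ((q - p) * z)) = exp (- q * z)" .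
  have e1: "exp (- p * z) - exp (- q * z) = exp (- p * z) * (1 - exp (- ((q - p) * z)))"
    unfolding right_diff_distrib mult_1_right e0 by (rule refl)
  have e2: "0 \<le> 1 - exp (- ((q - p) * z))" using assms by (simp add: mult_nonneg_nonneg)
  have e3: "1 - exp (- ((q - p) * z)) \<le> (q - p) * z" by (rule one_minus_exp_le)
  have e4: "exp (- p * z) \<le> exp (- a * z)" using assms by (simp add: mult_right_mono)
  have m1: "exp (- p * z) - exp (- q * z) \<le> exp (- a * z) * ((q - p) * z)"
    unfolding e1 by (rule mult_mono[OF e4 e3]) (use e2 in auto)
  have m2: "exp (- p * z) - exp (- q * z) \<ge> 0" using e1 e2 by simp
  have m3: "z * exp (- a * z) \<le> max 1 (1/a) * min 1 z"
  proof -
    have h1: "z * exp (- a * z) \<le> z" using assms by (simp add: mult_left_le)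
    have h2: "z * exp (- a * z) \<le> 1 / a"
    proof -
      have "a * z \<le> exp (a * z)" using exp_ge_add_one_self[of "a*z"] by linarith
      then have "a * z * exp (- a * z) \<le> 1" by (simp add: exp_minus field_simps)
      then show ?thesis using assms by (simp add: field_simps)
    qed
    show ?thesis
    proof (cases "z \<le> 1")
      case True
      have "(1::real) \<le> max 1 (1/a)" by (rule max.cobounded1)
      from mult_right_mono[OF this less_imp_le[OF assms(4)]]
      have h3: "z \<le> max 1 (1/a) * z" by (simp only: mult_1_left)
      have "min 1 z = z" using True by simp
      then show ?thesis unfolding \<open>min 1 z = z\<close> using h1 h3 by linarith
    next
      case False
      then have "min 1 z = 1" by simp
      have "1/a \<le> max 1 (1/a)" by simp
      then show ?thesis unfolding \<open>min 1 z = 1\<close> using h2 by linarith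
    qed
  qed
  have m4: "(q - p) * (z * exp (- a * z)) \<le> (q - p) * (max 1 (1/a) * min 1 z)"
    by (rule mult_left_mono[OF m3]) (use assms in auto)
  have m5: "exp (- a * z) * ((q - p) * z) = (q - p) * (z * exp (- a * z))" by (simp add: algebra_simps)
  have m6: "\<bar>(1 - exp (- q * z)) - (1 - exp (- p * z))\<bar> = exp (- p * z) - exp (- q * z)"
    using m2 by simp
  show ?thesis unfolding m6 using m1 m4 m5 by linarith
qed

lemma D_lip:
  assumes "0 < a" "a \<le> p" "a \<le> q"
  shows "\<bar>Dn q - Dn p\<bar> \<le> (max 1 (1/a) * (\<integral>z. min 1 z \<partial>\<nu>)) * \<bar>q - p\<bar>"
proof -
  have gen: "\<bar>Dn q - Dn p\<bar> \<le> (max 1 (1/a) * (\<integral>z. min 1 z \<partial>\<nu>)) * (q - p)"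
    if "a \<le> p" "p \<le> q" for p q
  proof -
    have "Dn q - Dn p = (\<integral>z. (1 - exp (- q * z)) - (1 - exp (- p * z)) \<partial>\<nu>)"
      unfolding Dn_def by (rule Bochner_Integration.integral_diff[symmetric]) (rule int_D, use that assms in linarith)+
    also have "\<bar>\<dots>\<bar> \<le> (\<integral>z. \<bar>(1 - exp (- q * z)) - (1 - exp (- p * z))\<bar> \<partial>\<nu>)"
      by (rule integral_abs_bound[simplified real_norm_def])
    also have "\<dots> \<le> (\<integral>z. (q - p) * (max 1 (1/a) * min 1 z) \<partial>\<nu>)"
    proof (rule integral_mono_AE)
      show "integrable \<nu> (\<lambda>z. \<bar>(1 - exp (- q * z)) - (1 - exp (- p * z))\<bar>)"
      proof -
        have iq: "integrable \<nu> (\<lambda>z. 1 - exp (- q * z))" by (rule int_D) (use that assms in linarith)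
        have ip: "integrable \<nu> (\<lambda>z. 1 - exp (- p * z))" by (rule int_D) (use that assms in linarith)
        show ?thesis by (rule integrable_abs, rule Bochner_Integration.integrable_diff[OF iq ip])
      qed
      show "integrable \<nu> (\<lambda>z. (q - p) * (max 1 (1/a) * min 1 z))"
        by (intro integrable_mult_right int_min1)
      show "AE z in \<nu>. \<bar>(1 - exp (- q * z)) - (1 - exp (- p * z))\<bar> \<le> (q - p) * (max 1 (1/a) * min 1 z)"
        using AE_pos by eventually_elim (use exp_diff_bound assms that in auto)
    qed
    also have "\<dots> = (max 1 (1/a) * (\<integral>z. min 1 z \<partial>\<nu>)) * (q - p)"
      using int_min1 by simp
    finally show ?thesis .
  qed
  show ?thesis
  proof (cases "p \<le> q")
    case True then show ?thesis using gen[of p q] assms by simp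
  next
    case False then show ?thesis using gen[of q p] assms by (simp add: abs_minus_commute)
  qed
qed

lemma Phi_isCont: assumes "q > 0" shows "isCont (Phi \<beta> \<nu>) q"
proof -
  let ?a = "q / 2"
  have "continuous_on {?a<..} Dn"
  proof (rule lipschitz_on_continuous_on)
    show "(max 1 (1/?a) * (\<integral>z. min 1 z \<partial>\<nu>))-lipschitz_on {?a<..} Dn"
    proof (rule lipschitz_onI)
      have "0 \<le> (\<integral>z. min 1 z \<partial>\<nu>)"
        by (rule integral_nonneg_AE) (use AE_pos in \<open>eventually_elim, auto\<close>)
      then show "0 \<le> max 1 (1/?a) * (\<integral>z. min 1 z \<partial>\<nu>)" by simp
      fix x y assume "x \<in> {?a<..}" "y \<in> {?a<..}"
      then show "dist (Dn x) (Dn y) \<le> (max 1 (1/?a) * (\<integral>z. min 1 z \<partial>\<nu>)) * dist x y"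
        using D_lip[of ?a y x] assms by (simp add: dist_real_def)
    qed
  qed
  then have "isCont Dn q" using assms
    by (subst (asm) continuous_on_eq_continuous_at) auto
  then show ?thesis unfolding Phi_eq[abs_def] by (intro continuous_intros)
qed

lemma Phi_cont_on: "A \<subseteq> {0<..} \<Longrightarrow> continuous_on A (Phi \<beta> \<nu>)"
  by (intro continuous_at_imp_continuous_on) (auto intro: Phi_isCont)

end

context nuctx begin

lemma H_eq: "Hfun b \<beta> \<nu> = (\<lambda>x. -(1/\<bar>b\<bar>) * (LBINT u=1..exp (- x). Phi \<beta> \<nu> u / u))"
  unfolding Hfun_def by (rule ext, subst interval_integral_endpoints_reverse) simp

lemma F_deriv:
  assumes "y0 > 0"
  shows "((\<lambda>y. LBINT u=1..y. Phi \<beta> \<nu> u / u) has_real_derivative Phi \<beta> \<nu> y0 / y0) (at y0)"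
proof -
  define a where "a = min (y0/2) (1/2)"
  define c where "c = max 2 (2*y0)"
  have a: "0 < a" "a < y0" "a \<le> 1" using assms by (auto simp: a_def)
  have c: "y0 < c" "1 \<le> c" using assms by (auto simp: c_def)
  have cont: "continuous_on {a..c} (\<lambda>u. Phi \<beta> \<nu> u / u)"
    using a by (intro continuous_intros Phi_cont_on) auto
  have "((\<lambda>y. LBINT u=ereal 1..ereal y. Phi \<beta> \<nu> u / u) has_vector_derivative Phi \<beta> \<nu> y0 / y0) (at y0 within {a..c})"
    by (rule interval_integral_FTC2[OF _ _ cont]) (use a c in auto)
  then have "((\<lambda>y. LBINT u=1..y. Phi \<beta> \<nu> u / u) has_vector_derivative Phi \<beta> \<nu> y0 / y0) (at y0 within {a..c})"
    by (simp add: one_ereal_def)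
  then show ?thesis
    using a c by (simp add: has_real_derivative_iff_has_vector_derivative at_within_Icc_at)
qed

lemma H_deriv: "(Hfun b \<beta> \<nu> has_real_derivative Phi \<beta> \<nu> (exp (- x)) / \<bar>b\<bar>) (at x)"
proof -
  have d1: "((\<lambda>x. LBINT u=1..exp (- x). Phi \<beta> \<nu> u / u) has_real_derivative
      (Phi \<beta> \<nu> (exp (- x)) / exp (- x)) * (- exp (- x))) (at x)"
    by (rule DERIV_chain2[OF F_deriv]) (auto intro!: derivative_eq_intros)
  have d2: "((\<lambda>x. -(1/\<bar>b\<bar>) * (LBINT u=1..exp (- x). Phi \<beta> \<nu> u / u)) has_real_derivative
      -(1/\<bar>b\<bar>) * ((Phi \<beta> \<nu> (exp (- x)) / exp (- x)) * (- exp (- x)))) (at x)"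
    by (rule DERIV_cmult[OF d1])
  have e: "-(1/\<bar>b\<bar>) * ((Phi \<beta> \<nu> (exp (- x)) / exp (- x)) * (- exp (- x))) = Phi \<beta> \<nu> (exp (- x)) / \<bar>b\<bar>"
    by simp
  show ?thesis by (subst H_eq) (rule d2[unfolded e])
qed

end

context nuctx begin

lemma ind_bound:
  fixes y z :: real
  assumes "y > 0" "z > 0"
  shows "\<bar>indicator {y..} z :: real\<bar> \<le> (1 / min 1 y) * min 1 z"
proof (cases "z \<ge> y")
  case True
  then have "min 1 y \<le> min 1 z" by simp
  then have "1 \<le> min 1 z / min 1 y" using assms by simp
  then show ?thesis using True by simp
next
  case False
  then show ?thesis using assms by simp
qed

lemma int_ind: assumes "y > 0" shows "integrable \<nu> (indicator {y..} :: real \<Rightarrow> real)"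
proof (rule int_bound[where C="1 / min 1 y"])
  show "indicator {y..} \<in> borel_measurable borel" by measurable
  show "\<bar>indicator {y..} z :: real\<bar> \<le> 1 / min 1 y * min 1 z" if "z > 0" for z
    by (rule ind_bound[OF assms that])
qed

lemma nubar_fin: "y > 0 \<Longrightarrow> emeasure \<nu> {y..} < \<infinity>"
  using int_ind[of y] by (simp add: integrable_indicator_iff)

lemma nubar_eq: "y > 0 \<Longrightarrow> nubar \<nu> y = (\<integral>z. indicator {y..} z \<partial>\<nu>)"
  by (simp add: nubar_def)

lemma nubar_nonneg: "nubar \<nu> y \<ge> 0"
  by (simp add: nubar_def)

lemma nubar_antimono: "0 < x \<Longrightarrow> x \<le> y \<Longrightarrow> nubar \<nu> y \<le> nubar \<nu> x"
  unfolding nubar_def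
  by (rule measure_mono_fmeasurable) (use nubar_fin[of x] nu_sets in \<open>auto simp: fmeasurable_def\<close>)

lemma nubar_exp_meas: "(\<lambda>s. nubar \<nu> (exp s)) \<in> borel_measurable borel"
proof -
  have "mono (\<lambda>s. - nubar \<nu> (exp s))"
    by (rule monoI) (simp add: nubar_antimono)
  then have "(\<lambda>s. - nubar \<nu> (exp s)) \<in> borel_measurable borel" by (rule borel_measurable_mono)
  then have "(\<lambda>s. - (- nubar \<nu> (exp s))) \<in> borel_measurable borel" by measurable
  then show ?thesis by simp
qed

lemma nubar_max_meas: "(\<lambda>s. nubar \<nu> (max 1 s)) \<in> borel_measurable borel"
proof -
  have "mono (\<lambda>s. - nubar \<nu> (max 1 s))"
    by (rule monoI) (simp add: nubar_antimono)
  then have "(\<lambda>s. - nubar \<nu> (max 1 s)) \<in> borel_measurable borel" by (rule borel_measurable_mono)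
  then have "(\<lambda>s. - (- nubar \<nu> (max 1 s))) \<in> borel_measurable borel" by measurable
  then show ?thesis by simp
qed

lemma H_formula:
  assumes "x \<ge> 0"
  shows "Hfun b \<beta> \<nu> x = (1/\<bar>b\<bar>) * (LINT s:{0..x}|lborel. Phi \<beta> \<nu> (exp (- s)))"
proof -
  let ?f = "\<lambda>u. - (Phi \<beta> \<nu> u / u)"
  have "(LBINT s=ereal 0..ereal x. (- exp (- s)) *\<^sub>R ?f (exp (- s))) = (LBINT y=ereal (exp (- 0))..ereal (exp (- x)). ?f y)"
  proof (rule interval_integral_substitution_finite[OF assms])
    show "((\<lambda>s. exp (- s)) has_real_derivative - exp (- s)) (at s within {0..x})" for s
      by (auto intro!: derivative_eq_intros)
    show "continuous_on ((\<lambda>s. exp (- s)) ` {0..x}) ?f"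
      by (intro continuous_intros Phi_cont_on) auto
    show "continuous_on {0..x} (\<lambda>s. - exp (- s))"
      by (intro continuous_intros)
  qed
  also have "\<dots> = - (LBINT y=1..exp (- x). Phi \<beta> \<nu> y / y)"
    by (simp add: interval_lebesgue_integral_uminus one_ereal_def)
  also have "\<dots> = \<bar>b\<bar> * Hfun b \<beta> \<nu> x" if "b \<noteq> 0"
    using that by (simp add: H_eq)
  finally have 1: "b \<noteq> 0 \<Longrightarrow> (LBINT s=ereal 0..ereal x. (- exp (- s)) *\<^sub>R ?f (exp (- s))) = \<bar>b\<bar> * Hfun b \<beta> \<nu> x" .
  have 2: "(LBINT s=ereal 0..ereal x. (- exp (- s)) *\<^sub>R ?f (exp (- s))) = (LBINT s=ereal 0..ereal x. Phi \<beta> \<nu> (exp (- s)))"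
    by (rule interval_integral_cong) simp
  show ?thesis
  proof (cases "b = 0")
    case True then show ?thesis by (simp add: Hfun_def)
  next
    case False
    have 3: "(LBINT s=ereal 0..ereal x. Phi \<beta> \<nu> (exp (- s))) = (LINT s:{0..x}|lborel. Phi \<beta> \<nu> (exp (- s)))"
      using assms by (simp add: interval_integral_Icc)
    show ?thesis using 1[OF False] unfolding 2 3 using False by (simp add: field_simps)
  qed
qed

lemma K_formula:
  assumes "x \<ge> 0"
  shows "(LBINT u=1..exp x. nubar \<nu> u / u) = (LINT s:{0..x}|lborel. nubar \<nu> (exp s))"
    and "set_integrable lborel {0..x} (\<lambda>s. nubar \<nu> (exp s))"
proof -
  let ?f = "\<lambda>u. nubar \<nu> u / u"
  have int: "set_integrable lborel {exp 0..exp x} ?f"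
  proof (rule set_integrable_bound[where f="\<lambda>_. nubar \<nu> 1"])
    show "set_integrable lborel {exp 0..exp x} (\<lambda>_. nubar \<nu> 1)"
      by (rule borel_integrable_atLeastAtMost') (rule continuous_on_const)
    have "set_borel_measurable lborel {exp 0..exp x} (\<lambda>u. nubar \<nu> (max 1 u) / u)"
      unfolding set_borel_measurable_def using nubar_max_meas by measurable
    then show "set_borel_measurable lborel {exp 0..exp x} ?f"
      unfolding set_borel_measurable_def
      by (rule measurable_cong[THEN iffD1, rotated]) (auto simp: indicator_def max_def)
    show "AE u in lborel. u \<in> {exp 0..exp x} \<longrightarrow> norm (?f u) \<le> norm (nubar \<nu> 1)"
    proof (rule AE_I2, rule impI)
      fix u :: real assume u: "u \<in> {exp 0..exp x}"
      then have "nubar \<nu> u \<le> nubar \<nu> 1" by (intro nubar_antimono) auto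
      moreover have "nubar \<nu> u / u \<le> nubar \<nu> u" using u nubar_nonneg[of u]
        using divide_left_mono[of 1 u "nubar \<nu> u"] by simp
      ultimately show "norm (?f u) \<le> norm (nubar \<nu> 1)" using u nubar_nonneg[of u] nubar_nonneg[of 1] by auto
    qed
  qed
  note sub = interval_integral_substitution[where g=exp and a=0 and b=x and g'=exp and f="?f", OF int _ _ _ assms]
  have d: "\<And>s. s \<in> {0..x} \<Longrightarrow> (exp has_real_derivative exp s) (at s)"
    by (auto intro!: derivative_eq_intros)
  have c: "continuous_on {0..x} exp" by (intro continuous_intros)
  have eq: "\<And>s. ?f (exp s) * exp s = nubar \<nu> (exp s)" by simp
  show "set_integrable lborel {0..x} (\<lambda>s. nubar \<nu> (exp s))"
    using sub(1)[OF d c] by (simp add: eq del: exp_zero)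
  show "(LBINT u=1..exp x. nubar \<nu> u / u) = (LINT s:{0..x}|lborel. nubar \<nu> (exp s))"
    using sub(2)[OF d c] assms by (simp add: eq interval_integral_Icc one_ereal_def)
qed

end


lemma key_ineq:
  fixes w :: real
  assumes "w > 0"
  shows "\<bar>(1 - exp (- w)) - (if 1 \<le> w then 1 else 0)\<bar> \<le> 6 * (exp (- w * exp (- 1)) - exp (- w))"
proof -
  have e2: "2 \<le> exp (1::real)" using exp_ge_add_one_self[of 1] by simp
  have e3: "exp (1::real) \<le> 3" by (rule exp_le)
  have k: "exp (- 1) \<le> (1/2::real)" using e2 by (simp add: exp_minus divide_simps)
  have k3: "exp (- 1) \<ge> (1/3::real)" using e3 by (simp add: exp_minus divide_simps)
  have "exp (- w) * exp (w * (1 - exp (- 1))) = exp (- w + w * (1 - exp (- 1)))" by (rule mult_exp_exp)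
  also have "- w + w * (1 - exp (- 1)) = - w * exp (- 1)" by (simp add: algebra_simps)
  finally have f: "exp (- w * exp (- 1)) = exp (- w) * exp (w * (1 - exp (- 1)))" by simp
  have "1 + w / 2 \<le> 1 + w * (1 - exp (- 1))"
    using k assms by (simp add: mult_left_mono[of "1/2" "1 - exp (- 1)" w, simplified])
  also have "\<dots> \<le> exp (w * (1 - exp (- 1)))" by (rule exp_ge_add_one_self)
  finally have g: "1 + w / 2 \<le> exp (w * (1 - exp (- 1)))" .
  have "exp (- w) * (1 + w / 2) \<le> exp (- w) * exp (w * (1 - exp (- 1)))"
    by (rule mult_left_mono[OF g]) simp
  then have A: "3 * w * exp (- w) \<le> 6 * (exp (- w * exp (- 1)) - exp (- w))"
    unfolding f by (simp add: algebra_simps)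
  show ?thesis
  proof (cases "1 \<le> w")
    case True
    have "exp (- w) \<le> 3 * w * exp (- w)" using True
      using mult_right_mono[of 1 "3*w" "exp (- w)"] by simp
    moreover have "\<bar>(1 - exp (- w)) - (if 1 \<le> w then 1 else 0)\<bar> = exp (- w)" using True by simp
    ultimately show ?thesis using A by linarith
  next
    case False
    have "exp (- 1) \<le> exp (- w)" using False by simp
    then have h: "1/3 \<le> exp (- w)" using k3 by linarith
    have "w * (1/3) \<le> w * exp (- w)" by (rule mult_left_mono[OF h]) (use assms in simp)
    then have "w \<le> 3 * w * exp (- w)" by simp
    moreover have "1 - exp (- w) \<le> w" using exp_ge_add_one_self[of "-w"] by linarith
    moreover have "0 \<le> 1 - exp (- w)" using assms by simp
    ultimately show ?thesis using A False by simp
  qed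
qed

context nuctx begin

lemma Dn_isCont: "q > 0 \<Longrightarrow> isCont Dn q"
proof -
  assume q: "q > 0"
  have "Dn = (\<lambda>q. Phi \<beta> \<nu> q - \<beta> * q)" by (rule ext) (simp add: Phi_eq)
  then show ?thesis using Phi_isCont[OF q] by (simp add: continuous_intros)
qed

lemma G_isCont: "isCont (\<lambda>s. Dn (exp (- s))) s"
  by (rule continuous_at_compose[of _ "\<lambda>s. exp (- s)", unfolded o_def]) (auto intro!: continuous_intros Dn_isCont)

lemma PhiE_isCont: "isCont (\<lambda>s. Phi \<beta> \<nu> (exp (- s))) s"
  by (rule continuous_at_compose[of _ "\<lambda>s. exp (- s)", unfolded o_def]) (auto intro!: continuous_intros Phi_isCont)

lemma diff_bound:
  "\<bar>Phi \<beta> \<nu> (exp (- s)) - nubar \<nu> (exp s)\<bar> \<le> \<beta> * exp (- s) + 6 * (Dn (exp (- s)) - Dn (exp (- (s + 1))))"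
proof -
  define q where "q = exp (- s)"
  define q' where "q' = exp (- (s + 1))"
  have q: "q > 0" "q' > 0" by (auto simp: q_def q'_def)
  have "Dn q - nubar \<nu> (exp s) = (\<integral>z. (1 - exp (- q * z)) - indicator {exp s..} z \<partial>\<nu>)"
    unfolding Dn_def nubar_eq[OF exp_gt_zero]
    by (rule Bochner_Integration.integral_diff[symmetric]) (rule int_D, use q in simp, rule int_ind, simp)
  also have "\<bar>\<dots>\<bar> \<le> (\<integral>z. \<bar>(1 - exp (- q * z)) - indicator {exp s..} z\<bar> \<partial>\<nu>)"
    by (rule integral_abs_bound[simplified real_norm_def])
  also have "\<dots> \<le> (\<integral>z. 6 * ((1 - exp (- q * z)) - (1 - exp (- q' * z))) \<partial>\<nu>)"
  proof (rule integral_mono_AE)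
    have iq: "integrable \<nu> (\<lambda>z. 1 - exp (- q * z))" by (rule int_D) (use q in simp)
    have iq': "integrable \<nu> (\<lambda>z. 1 - exp (- q' * z))" by (rule int_D) (use q in simp)
    have ii: "integrable \<nu> (indicator {exp s..} :: real \<Rightarrow> real)" by (rule int_ind) simp
    show "integrable \<nu> (\<lambda>z. \<bar>(1 - exp (- q * z)) - indicator {exp s..} z\<bar>)"
      by (rule integrable_abs, rule Bochner_Integration.integrable_diff[OF iq ii])
    show "integrable \<nu> (\<lambda>z. 6 * ((1 - exp (- q * z)) - (1 - exp (- q' * z))))"
      by (rule integrable_mult_right, rule Bochner_Integration.integrable_diff[OF iq iq'])
    show "AE z in \<nu>. \<bar>(1 - exp (- q * z)) - indicator {exp s..} z\<bar> \<le> 6 * ((1 - exp (- q * z)) - (1 - exp (- q' * z)))"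
      using AE_pos
    proof eventually_elim
      case (elim z)
      define w where "w = q * z"
      have w: "w > 0" using q elim by (simp add: w_def)
      have i: "indicator {exp s..} z = (if 1 \<le> w then 1 else (0::real))"
      proof -
        have "(exp s \<le> z) = (1 \<le> w)"
          unfolding w_def q_def by (simp add: exp_minus field_simps)
        then show ?thesis by (simp add: indicator_def)
      qed
      have ee: "q' = q * exp (- 1)" unfolding q_def q'_def by (subst mult_exp_exp) simp
      have j: "- q' * z = - w * exp (- 1)"
        unfolding ee w_def by (simp add: algebra_simps)
      show ?case using key_ineq[OF w] unfolding i j by (simp add: w_def)
    qed
  qed
  also have "\<dots> = 6 * (\<integral>z. (1 - exp (- q * z)) - (1 - exp (- q' * z)) \<partial>\<nu>)"
    by (rule integral_mult_right_zero)
  also have "(\<integral>z. (1 - exp (- q * z)) - (1 - exp (- q' * z)) \<partial>\<nu>) = Dn q - Dn q'"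
    unfolding Dn_def by (rule Bochner_Integration.integral_diff) (rule int_D, use q in simp)+
  finally have "\<bar>Dn q - nubar \<nu> (exp s)\<bar> \<le> 6 * (Dn q - Dn q')" .
  moreover have "Phi \<beta> \<nu> q = \<beta> * q + Dn q" by (rule Phi_eq)
  moreover have "\<beta> * q \<ge> 0" using beta_nonneg q by simp
  ultimately show ?thesis unfolding q_def q'_def by linarith
qed

end

context nuctx begin

lemma G_sum:
  fixes a b c :: real
  shows "(LBINT s=ereal a..ereal b. Dn (exp (- s))) + (LBINT s=ereal b..ereal c. Dn (exp (- s)))
       = (LBINT s=ereal a..ereal c. Dn (exp (- s)))"
proof (rule interval_integral_sum)
  have "interval_lebesgue_integrable lborel (ereal (min a (min b c))) (ereal (max a (max b c))) (\<lambda>s. Dn (exp (- s)))"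
    by (rule interval_integrable_isCont) (rule G_isCont)
  then show "interval_lebesgue_integrable lborel (min (ereal a) (min (ereal b) (ereal c)))
      (max (ereal a) (max (ereal b) (ereal c))) (\<lambda>s. Dn (exp (- s)))" by simp
qed

lemma tele:
  assumes "x \<ge> 0"
  shows "(LINT s:{0..x}|lborel. Dn (exp (- s)) - Dn (exp (- (s + 1)))) \<le> (LBINT s=ereal 0..ereal 1. Dn (exp (- s)))"
proof -
  let ?G = "\<lambda>s. Dn (exp (- s))"
  have i1: "interval_lebesgue_integrable lborel (ereal 0) (ereal x) ?G"
    by (rule interval_integrable_isCont) (rule G_isCont)
  have i2: "interval_lebesgue_integrable lborel (ereal 0) (ereal x) (\<lambda>s. ?G (s + 1))"
    by (rule interval_integrable_isCont) (rule continuous_at_compose[of _ "\<lambda>s. s + 1", unfolded o_def], auto intro!: continuous_intros G_isCont)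
  have "(LINT s:{0..x}|lborel. ?G s - ?G (s + 1)) = (LBINT s=ereal 0..ereal x. ?G s - ?G (s + 1))"
    using assms by (simp add: interval_integral_Icc)
  also have "\<dots> = (LBINT s=ereal 0..ereal x. ?G s) - (LBINT s=ereal 0..ereal x. ?G (s + 1))"
    by (rule interval_lebesgue_integral_diff(2)[OF i1 i2])
  also have "(LBINT s=ereal 0..ereal x. ?G (s + 1)) = (LBINT s=ereal 1..ereal (x + 1). ?G s)"
  proof -
    have "(LBINT s=ereal 0..ereal x. (\<lambda>_. 1::real) s *\<^sub>R ?G ((\<lambda>s. s + 1) s)) = (LBINT y=ereal ((\<lambda>s. s + 1) 0)..ereal ((\<lambda>s. s + 1) x). ?G y)"
    proof (rule interval_integral_substitution_finite[OF assms])
      show "((\<lambda>s. s + 1) has_real_derivative 1) (at s within {0..x})" for s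
        by (auto intro!: derivative_eq_intros)
      show "continuous_on ((\<lambda>s. s + 1) ` {0..x}) ?G"
        by (intro continuous_at_imp_continuous_on ballI G_isCont)
      show "continuous_on {0..x} (\<lambda>_. 1::real)" by (rule continuous_on_const)
    qed
    then show ?thesis by simp
  qed
  also have "(LBINT s=ereal 0..ereal x. ?G s) = (LBINT s=ereal 0..ereal 1. ?G s) + (LBINT s=ereal 1..ereal x. ?G s)"
    by (rule G_sum[symmetric])
  also have "(LBINT s=ereal 1..ereal (x + 1). ?G s) = (LBINT s=ereal 1..ereal x. ?G s) + (LBINT s=ereal x..ereal (x + 1). ?G s)"
    by (rule G_sum[symmetric])
  also have "(LBINT s=ereal x..ereal (x + 1). ?G s) \<ge> 0"
  proof -
    have "(LBINT s=ereal x..ereal (x + 1). ?G s) = (LINT s:{x..x+1}|lborel. ?G s)"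
      by (simp add: interval_integral_Icc)
    also have "\<dots> \<ge> 0" unfolding set_lebesgue_integral_def
      by (intro integral_nonneg_AE AE_I2) (auto simp: indicator_def intro!: D_nonneg)
    finally show ?thesis by simp
  qed
  ultimately show ?thesis by linarith
qed

lemma E_bound:
  assumes "x \<ge> 0"
  shows "set_integrable lborel {0..x} (\<lambda>s. Phi \<beta> \<nu> (exp (- s)) - nubar \<nu> (exp s))"
    and "\<bar>LINT s:{0..x}|lborel. Phi \<beta> \<nu> (exp (- s)) - nubar \<nu> (exp s)\<bar>
       \<le> \<beta> + 6 * (LBINT s=ereal 0..ereal 1. Dn (exp (- s)))"
proof -
  let ?G = "\<lambda>s. Dn (exp (- s))"
  let ?d = "\<lambda>s. Phi \<beta> \<nu> (exp (- s)) - nubar \<nu> (exp s)"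
  let ?B = "\<lambda>s. \<beta> * exp (- s) + 6 * (Dn (exp (- s)) - Dn (exp (- (s + 1))))"
  have i1: "set_integrable lborel {0..x} (\<lambda>s. Phi \<beta> \<nu> (exp (- s)))"
    by (rule borel_integrable_atLeastAtMost') (intro continuous_at_imp_continuous_on ballI PhiE_isCont)
  have i2: "set_integrable lborel {0..x} (\<lambda>s. nubar \<nu> (exp s))" by (rule K_formula(2)[OF assms])
  show id: "set_integrable lborel {0..x} ?d" by (rule set_integral_diff(1)[OF i1 i2])
  have cG1: "isCont (\<lambda>s. Dn (exp (- (s + 1)))) s" for s
    using continuous_at_compose[of s "\<lambda>s. s + 1" "\<lambda>s. Dn (exp (- s))", unfolded o_def] G_isCont
    by (auto intro!: continuous_intros)
  have iE: "set_integrable lborel {0..x} (\<lambda>s. exp (- s))"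
    by (rule borel_integrable_atLeastAtMost') (intro continuous_intros)
  have iT: "set_integrable lborel {0..x} (\<lambda>s. Dn (exp (- s)) - Dn (exp (- (s + 1))))"
    by (rule borel_integrable_atLeastAtMost') (intro continuous_at_imp_continuous_on ballI continuous_intros G_isCont cG1)
  have iB: "set_integrable lborel {0..x} ?B"
    by (rule borel_integrable_atLeastAtMost') (intro continuous_at_imp_continuous_on ballI continuous_intros G_isCont cG1)
  have up: "(LINT s:{0..x}|lborel. ?d s) \<le> (LINT s:{0..x}|lborel. ?B s)"
    by (rule set_integral_mono[OF id iB]) (use diff_bound in \<open>simp add: abs_le_iff\<close>)
  have lo: "(LINT s:{0..x}|lborel. - ?B s) \<le> (LINT s:{0..x}|lborel. ?d s)"
  proof (rule set_integral_mono[OF _ id])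
    show "set_integrable lborel {0..x} (\<lambda>s. - ?B s)"
      by (rule borel_integrable_atLeastAtMost') (intro continuous_at_imp_continuous_on ballI continuous_intros G_isCont cG1)
    show "- ?B s \<le> ?d s" for s using diff_bound[of s] by (simp add: abs_le_iff)
  qed
  have lo': "(LINT s:{0..x}|lborel. - ?B s) = - (LINT s:{0..x}|lborel. ?B s)"
    by (rule set_integral_uminus[OF iB])
  have "(LINT s:{0..x}|lborel. ?B s) = \<beta> * (LINT s:{0..x}|lborel. exp (- s))
      + 6 * (LINT s:{0..x}|lborel. Dn (exp (- s)) - Dn (exp (- (s + 1))))"
    by (simp only: set_integral_add(2)[OF set_integrable_mult_right[OF iE, of \<beta>] set_integrable_mult_right[OF iT, of 6]]
       set_integral_mult_right)
  moreover have "(LINT s:{0..x}|lborel. exp (- s)) \<le> 1"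
  proof -
    have "(LINT s:{0..x}|lborel. exp (- s)) = (LBINT s=ereal 0..ereal x. exp (- s))"
      using assms by (simp add: interval_integral_Icc)
    also have "\<dots> = (- exp (- x)) - (- exp (- 0))"
    proof (rule interval_integral_FTC_finite[where F="\<lambda>s. - exp (- s)"])
      show "continuous_on {min 0 x..max 0 x} (\<lambda>s. exp (- s))" by (intro continuous_intros)
      fix s show "((\<lambda>s. - exp (- s)) has_vector_derivative exp (- s)) (at s within {min 0 x..max 0 x})"
        unfolding has_real_derivative_iff_has_vector_derivative[symmetric]
        by (auto intro!: derivative_eq_intros)
    qed
    also have "\<dots> \<le> 1" by simp
    finally show ?thesis .
  qed
  then have "\<beta> * (LINT s:{0..x}|lborel. exp (- s)) \<le> \<beta> * 1"
    by (rule mult_left_mono) (rule beta_nonneg)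
  moreover note tele[OF assms]
  ultimately have "(LINT s:{0..x}|lborel. ?B s) \<le> \<beta> + 6 * (LBINT s=ereal 0..ereal 1. Dn (exp (- s)))"
    by linarith
  then show "\<bar>LINT s:{0..x}|lborel. ?d s\<bar> \<le> \<beta> + 6 * (LBINT s=ereal 0..ereal 1. Dn (exp (- s)))"
    using up lo lo' by linarith
qed

end

context nuctx begin

lemma part1:
  assumes b: "b \<noteq> 0" and Hinf: "filterlim (Hfun b \<beta> \<nu>) at_top at_top"
  shows "Hfun b \<beta> \<nu> \<sim>[at_top] (\<lambda>x. (1 / \<bar>b\<bar>) * (LBINT u=1..exp x. nubar \<nu> u / u))"
proof -
  define H where "H = Hfun b \<beta> \<nu>"
  define K where "K = (\<lambda>x. (1 / \<bar>b\<bar>) * (LBINT u=1..exp x. nubar \<nu> u / u))"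
  define B where "B = (\<beta> + 6 * (LBINT s=ereal 0..ereal 1. Dn (exp (- s)))) / \<bar>b\<bar>"
  have HK: "\<bar>H x - K x\<bar> \<le> B" if x: "x \<ge> 0" for x
  proof -
    have "H x - K x = (1/\<bar>b\<bar>) * ((LINT s:{0..x}|lborel. Phi \<beta> \<nu> (exp (- s))) - (LINT s:{0..x}|lborel. nubar \<nu> (exp s)))"
      unfolding H_def K_def H_formula[OF x] K_formula(1)[OF x] by (simp add: algebra_simps)
    also have "(LINT s:{0..x}|lborel. Phi \<beta> \<nu> (exp (- s))) - (LINT s:{0..x}|lborel. nubar \<nu> (exp s))
        = (LINT s:{0..x}|lborel. Phi \<beta> \<nu> (exp (- s)) - nubar \<nu> (exp s))"
    proof (rule set_integral_diff(2)[symmetric])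
      show "set_integrable lborel {0..x} (\<lambda>s. Phi \<beta> \<nu> (exp (- s)))"
        by (rule borel_integrable_atLeastAtMost') (intro continuous_at_imp_continuous_on ballI PhiE_isCont)
      show "set_integrable lborel {0..x} (\<lambda>s. nubar \<nu> (exp s))" by (rule K_formula(2)[OF x])
    qed
    finally have "\<bar>H x - K x\<bar> = (1/\<bar>b\<bar>) * \<bar>LINT s:{0..x}|lborel. Phi \<beta> \<nu> (exp (- s)) - nubar \<nu> (exp s)\<bar>"
      by (simp add: abs_mult)
    also have "\<dots> \<le> (1/\<bar>b\<bar>) * (\<beta> + 6 * (LBINT s=ereal 0..ereal 1. Dn (exp (- s))))"
      by (rule mult_left_mono[OF E_bound(2)[OF x]]) simp
    finally show ?thesis by (simp add: B_def)
  qed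
  have Hinf': "filterlim H at_top at_top" using Hinf by (simp add: H_def)
  have Hpos: "eventually (\<lambda>x. H x > 0) at_top"
    using Hinf' by (simp add: filterlim_at_top_dense)
  have lim0: "((\<lambda>x. (H x - K x) / H x) \<longlongrightarrow> 0) at_top"
  proof (rule tendsto_0_le[OF tendsto_inverse_0_at_top[OF Hinf'], where K=B])
    show "eventually (\<lambda>x. norm ((H x - K x) / H x) \<le> norm (inverse (H x)) * B) at_top"
      using Hpos eventually_ge_at_top[of 0]
    proof eventually_elim
      case (elim x)
      have "\<bar>H x - K x\<bar> / \<bar>H x\<bar> \<le> B / \<bar>H x\<bar>"
        by (rule divide_right_mono[OF HK]) (use elim in auto)
      then show ?case by (simp add: divide_inverse abs_mult mult.commute)
    qed
  qed
  have l1: "((\<lambda>x. 1 - (H x - K x) / H x) \<longlongrightarrow> 1 - 0) at_top"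
    by (intro tendsto_intros lim0)
  have ev: "eventually (\<lambda>x. 1 - (H x - K x) / H x = K x / H x) at_top"
    using Hpos by eventually_elim (simp add: field_simps)
  have "((\<lambda>x. K x / H x) \<longlongrightarrow> 1) at_top"
    using l1 tendsto_cong[OF ev] by simp
  then have "K \<sim>[at_top] H" by (rule asymp_equivI')
  then show ?thesis unfolding H_def K_def by (rule asymp_equiv_symI)
qed

end

context nuctx begin

definition Psi :: "real \<Rightarrow> real" where "Psi y = (\<integral>z. min z y \<partial>\<nu>)"

lemma int_Psi: assumes "y \<ge> 0" shows "integrable \<nu> (\<lambda>z. min z y)"
proof (rule int_bound[where C="max 1 y"])
  show "(\<lambda>z. min z y) \<in> borel_measurable borel" by measurable
  show "\<bar>min z y\<bar> \<le> max 1 y * min 1 z" if z: "z > 0" for z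
  proof (cases "z \<le> 1")
    case True
    have h: "z \<le> max 1 y * z" using mult_right_mono[of 1 "max 1 y" z] z by simp
    have a: "\<bar>min z y\<bar> = min z y" using z assms by simp
    have m: "min 1 z = z" using True by simp
    have "min z y \<le> z" by simp
    then show ?thesis unfolding a m using h by linarith
  next
    case False
    then show ?thesis using z assms by auto
  qed
qed

lemma Psi_mono: "0 \<le> y \<Longrightarrow> y \<le> y' \<Longrightarrow> Psi y \<le> Psi y'"
  unfolding Psi_def by (rule integral_mono[OF int_Psi int_Psi]) auto

lemma Psi_half:
  assumes "y > 0"
  shows "Psi y \<le> Psi (y/2) + (y/2) * nubar \<nu> (y/2)"
proof -
  have "Psi y \<le> (\<integral>z. min z (y/2) + (y/2) * indicator {y/2..} z \<partial>\<nu>)"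
    unfolding Psi_def
  proof (rule integral_mono)
    show "integrable \<nu> (\<lambda>z. min z y)" by (rule int_Psi) (use assms in simp)
    show "integrable \<nu> (\<lambda>z. min z (y/2) + (y/2) * indicator {y/2..} z)"
      using assms by (intro Bochner_Integration.integrable_add integrable_mult_right int_Psi int_ind) auto
    show "min z y \<le> min z (y/2) + (y/2) * indicator {y/2..} z" for z
      by (auto simp: indicator_def)
  qed
  also have "\<dots> = Psi (y/2) + (y/2) * nubar \<nu> (y/2)"
    unfolding Psi_def nubar_eq[of "y/2", OF half_gt_zero[OF assms]]
    by (subst Bochner_Integration.integral_add) (auto intro!: int_Psi integrable_mult_right int_ind simp: assms less_imp_le[OF assms])
  finally show ?thesis .
qed

lemma Psi_nonneg: "y \<ge> 0 \<Longrightarrow> Psi y \<ge> 0"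
  unfolding Psi_def by (rule integral_nonneg_AE) (use AE_pos in \<open>eventually_elim, auto\<close>)

context
  fixes X :: real
  assumes X: "X > 0" and Xh: "\<And>y. y \<ge> X \<Longrightarrow> nubar \<nu> (y/2) \<le> 3/2 * nubar \<nu> y"
begin

lemma Psi_ind: "\<forall>y. X \<le> y \<longrightarrow> y < 2^n * X \<longrightarrow> Psi y \<le> Psi (2*X) + 3 * y * nubar \<nu> y"
proof (induction n)
  case 0 then show ?case by auto
next
  case (Suc n)
  show ?case
  proof (intro allI impI)
    fix y assume y1: "X \<le> y" and y2: "y < 2^Suc n * X"
    show "Psi y \<le> Psi (2*X) + 3 * y * nubar \<nu> y"
    proof (cases "y < 2 * X")
      case True
      have "Psi y \<le> Psi (2*X)" by (rule Psi_mono) (use True y1 X in auto)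
      moreover have "0 \<le> 3 * y * nubar \<nu> y" using y1 X nubar_nonneg[of y] by simp
      ultimately show ?thesis by linarith
    next
      case False
      have a1: "X \<le> y/2" using False by simp
      have a2: "y/2 < 2^n * X" using y2 by simp
      have ih: "Psi (y/2) \<le> Psi (2*X) + 3 * (y/2) * nubar \<nu> (y/2)"
        using Suc.IH a1 a2 by blast
      have h: "Psi y \<le> Psi (y/2) + (y/2) * nubar \<nu> (y/2)" by (rule Psi_half) (use y1 X in auto)
      have "nubar \<nu> (y/2) \<le> 3/2 * nubar \<nu> y" by (rule Xh[OF y1])
      then have "2 * y * nubar \<nu> (y/2) \<le> 2 * y * (3/2 * nubar \<nu> y)"
        by (rule mult_left_mono) (use y1 X in auto)
      then show ?thesis using ih h by (simp add: algebra_simps)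
    qed
  qed
qed

lemma Psi_bound: "y \<ge> X \<Longrightarrow> Psi y \<le> Psi (2*X) + 3 * y * nubar \<nu> y"
proof -
  assume y: "y \<ge> X"
  obtain n where "y / X < 2 ^ n" using real_arch_pow[of 2 "y / X"] by auto
  then have "y < 2^n * X" using X by (simp add: field_simps)
  then show ?thesis using Psi_ind[of n] y by auto
qed

lemma yL_A: assumes pos: "\<And>y. y > 0 \<Longrightarrow> nubar \<nu> y > 0"
  shows "\<forall>y. X \<le> y \<longrightarrow> y < 2^n * X \<longrightarrow> y * nubar \<nu> y \<ge> X * nubar \<nu> (2*X)"
proof (induction n)
  case 0 then show ?case by auto
next
  case (Suc n)
  show ?case
  proof (intro allI impI)
    fix y assume y1: "X \<le> y" and y2: "y < 2^Suc n * X"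
    show "y * nubar \<nu> y \<ge> X * nubar \<nu> (2*X)"
    proof (cases "y < 2 * X")
      case True
      have "nubar \<nu> (2*X) \<le> nubar \<nu> y" by (rule nubar_antimono) (use True y1 X in auto)
      then show ?thesis by (rule mult_mono[OF y1]) (use X y1 nubar_nonneg in auto)
    next
      case False
      have a1: "X \<le> y/2" using False by simp
      have a2: "y/2 < 2^n * X" using y2 by simp
      have ih: "(y/2) * nubar \<nu> (y/2) \<ge> X * nubar \<nu> (2*X)"
        using Suc.IH a1 a2 by blast
      have "nubar \<nu> (y/2) \<le> 3/2 * nubar \<nu> y" by (rule Xh[OF y1])
      then have "y * nubar \<nu> (y/2) \<le> y * (3/2 * nubar \<nu> y)"
        by (rule mult_left_mono) (use y1 X in auto)
      moreover have "X * nubar \<nu> (2*X) \<ge> 0" using X nubar_nonneg by simp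
      ultimately show ?thesis using ih by (simp add: algebra_simps)
    qed
  qed
qed

lemma yL_B: assumes pos: "\<And>y. y > 0 \<Longrightarrow> nubar \<nu> y > 0"
  shows "\<forall>y. 2^n * X \<le> y \<longrightarrow> y * nubar \<nu> y \<ge> (4/3)^n * (X * nubar \<nu> (2*X))"
proof (induction n)
  case 0
  show ?case
  proof (intro allI impI)
    fix y :: real assume y: "2^0 * X \<le> y"
    obtain n where "y / X < 2 ^ n" using real_arch_pow[of 2 "y / X"] by auto
    then have "y < 2^n * X" using X by (simp add: field_simps)
    then show "y * nubar \<nu> y \<ge> (4/3)^0 * (X * nubar \<nu> (2*X))" using yL_A[OF pos, of n] y by auto
  qed
next
  case (Suc n)
  show ?case
  proof (intro allI impI)
    fix y :: real assume y: "2^Suc n * X \<le> y"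
    have p: "(2::real)^n \<ge> 1" by simp
    have "1 * X \<le> 2^n * X" using mult_right_mono[OF p, of X] X by simp
    then have "2 * X \<le> 2 * (2^n * X)" by linarith
    moreover have "2 * (2^n * X) = 2^Suc n * X" by simp
    ultimately have y1: "y \<ge> 2 * X" using y by linarith
    have a2: "2^n * X \<le> y/2" using y by simp
    have ih: "(y/2) * nubar \<nu> (y/2) \<ge> (4/3)^n * (X * nubar \<nu> (2*X))"
      using Suc.IH a2 by blast
    have "nubar \<nu> (y/2) \<le> 3/2 * nubar \<nu> y" by (rule Xh) (use y1 X in auto)
    then have "y * nubar \<nu> (y/2) \<le> y * (3/2 * nubar \<nu> y)"
      by (rule mult_left_mono) (use y1 X in auto)
    then show "y * nubar \<nu> y \<ge> (4/3)^Suc n * (X * nubar \<nu> (2*X))" using ih by (simp add: algebra_simps)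
  qed
qed

lemma yL_lim: assumes pos: "\<And>y. y > 0 \<Longrightarrow> nubar \<nu> y > 0"
  shows "filterlim (\<lambda>y. y * nubar \<nu> y) at_top at_top"
proof (subst filterlim_at_top, intro allI)
  fix Z :: real
  define c0 where "c0 = X * nubar \<nu> (2*X)"
  have c0: "c0 > 0" unfolding c0_def using X pos[of "2*X"] by simp
  obtain n where n: "Z / c0 < (4/3) ^ n" using real_arch_pow[of "4/3" "Z / c0"] by auto
  have Zc: "Z \<le> (4/3)^n * c0" using n c0 by (simp add: field_simps)
  show "eventually (\<lambda>y. Z \<le> y * nubar \<nu> y) at_top"
    using eventually_ge_at_top[of "2^n * X"]
  proof eventually_elim
    case (elim y)
    then have "y * nubar \<nu> y \<ge> (4/3)^n * c0" using yL_B[OF pos, of n] unfolding c0_def by blast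
    then show ?case using Zc by linarith
  qed
qed

end

end

context nuctx begin

lemma lower:
  assumes y: "y > 0" and s: "s > 0"
  shows "(1 - exp (- s)) * nubar \<nu> (s * y) \<le> Dn (1 / y)"
proof -
  have sy: "s * y > 0" using s y by simp
  have "(1 - exp (- s)) * nubar \<nu> (s * y) = (\<integral>z. (1 - exp (- s)) * indicator {s * y..} z \<partial>\<nu>)"
    unfolding nubar_eq[OF sy] by (rule integral_mult_right_zero[symmetric])
  also have "\<dots> \<le> (\<integral>z. 1 - exp (- (1 / y) * z) \<partial>\<nu>)"
  proof (rule integral_mono_AE)
    show "integrable \<nu> (\<lambda>z. (1 - exp (- s)) * indicator {s * y..} z)"
      by (intro integrable_mult_right int_ind sy)
    show "integrable \<nu> (\<lambda>z. 1 - exp (- (1 / y) * z))" by (rule int_D) (use y in simp)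
    show "AE z in \<nu>. (1 - exp (- s)) * indicator {s * y..} z \<le> 1 - exp (- (1 / y) * z)"
      using AE_pos
    proof eventually_elim
      case (elim z)
      show ?case
      proof (cases "s * y \<le> z")
        case True
        then have "s \<le> z / y" using y by (simp add: field_simps)
        then have "exp (- (z / y)) \<le> exp (- s)" by simp
        then show ?thesis using True by (simp add: indicator_def)
      next
        case False
        have "0 < z / y" using elim y by simp
        then have "exp (- (z / y)) \<le> 1" by simp
        then show ?thesis using False by (simp add: indicator_def)
      qed
    qed
  qed
  also have "\<dots> = Dn (1 / y)" by (simp add: Dn_def)
  finally show ?thesis .
qed

lemma upper:
  assumes y: "y > 0" and e: "\<epsilon> > 0"
  shows "Dn (1 / y) \<le> nubar \<nu> (\<epsilon> * y) + (1 / y) * Psi (\<epsilon> * y)"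
proof -
  have ey: "\<epsilon> * y > 0" using e y by simp
  have "Dn (1 / y) = (\<integral>z. 1 - exp (- (1 / y) * z) \<partial>\<nu>)" by (simp add: Dn_def)
  also have "\<dots> \<le> (\<integral>z. indicator {\<epsilon> * y..} z + (1 / y) * min z (\<epsilon> * y) \<partial>\<nu>)"
  proof (rule integral_mono_AE)
    show "integrable \<nu> (\<lambda>z. 1 - exp (- (1 / y) * z))" by (rule int_D) (use y in simp)
    show "integrable \<nu> (\<lambda>z. indicator {\<epsilon> * y..} z + (1 / y) * min z (\<epsilon> * y))"
      using ey by (intro Bochner_Integration.integrable_add integrable_mult_right int_ind int_Psi) auto
    show "AE z in \<nu>. 1 - exp (- (1 / y) * z) \<le> indicator {\<epsilon> * y..} z + (1 / y) * min z (\<epsilon> * y)"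
      using AE_pos
    proof eventually_elim
      case (elim z)
      show ?case
      proof (cases "\<epsilon> * y \<le> z")
        case True
        have "0 \<le> (1 / y) * min z (\<epsilon> * y)" using y ey elim by simp
        moreover have "1 - exp (- (1 / y) * z) \<le> 1" by simp
        moreover have "indicator {\<epsilon> * y..} z = (1::real)" using True by simp
        ultimately show ?thesis by linarith
      next
        case False
        have "1 - exp (- (1 / y) * z) \<le> (1 / y) * z" using exp_ge_add_one_self[of "- (1 / y) * z"] by simp
        then show ?thesis using False by (simp add: indicator_def)
      qed
    qed
  qed
  also have "\<dots> = nubar \<nu> (\<epsilon> * y) + (1 / y) * Psi (\<epsilon> * y)"
    unfolding nubar_eq[OF ey] Psi_def
    by (subst Bochner_Integration.integral_add) (auto intro!: int_ind int_Psi integrable_mult_right simp: ey less_imp_le[OF ey])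
  finally show ?thesis .
qed

end

context nuctx begin

lemma sv_pos:
  assumes sv: "slowly_varying (nubar \<nu>)" and y0: "y0 > 0"
  shows "nubar \<nu> y0 > 0"
proof (rule ccontr)
  assume "\<not> nubar \<nu> y0 > 0"
  then have z: "nubar \<nu> y0 = 0" using nubar_nonneg[of y0] by simp
  have lim: "((\<lambda>x. nubar \<nu> (2 * x) / nubar \<nu> x) \<longlongrightarrow> 1) at_top"
    using sv unfolding slowly_varying_def by simp
  have ev: "eventually (\<lambda>x. nubar \<nu> (2 * x) / nubar \<nu> x = 0) at_top"
    using eventually_ge_at_top[of y0]
  proof eventually_elim
    case (elim x)
    have "nubar \<nu> x \<le> nubar \<nu> y0" by (rule nubar_antimono) (use y0 elim in auto)
    then have "nubar \<nu> x = 0" using z nubar_nonneg[of x] by simp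
    then show ?case by simp
  qed
  have l0: "((\<lambda>x::real. 0::real) \<longlongrightarrow> 1) at_top" by (rule Lim_transform_eventually[OF lim ev])
  have "(0::real) = 1" by (rule tendsto_unique[OF _ tendsto_const l0]) simp
  then show False by simp
qed

lemma ratio_lim:
  assumes sv: "slowly_varying (nubar \<nu>)"
  shows "((\<lambda>y. Phi \<beta> \<nu> (1 / y) / nubar \<nu> y) \<longlongrightarrow> 1) at_top"
proof -
  note pos = sv_pos[OF sv]
  have svc: "((\<lambda>x. nubar \<nu> (c * x) / nubar \<nu> x) \<longlongrightarrow> 1) at_top" if "c > 0" for c
    using sv that unfolding slowly_varying_def by blast
  have "eventually (\<lambda>x. nubar \<nu> ((1/2) * x) / nubar \<nu> x < 3/2) at_top"
    by (rule order_tendstoD(2)[OF svc]) auto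
  then obtain X0 where X0: "\<And>x. x \<ge> X0 \<Longrightarrow> nubar \<nu> ((1/2) * x) / nubar \<nu> x < 3/2"
    by (auto simp: eventually_at_top_linorder)
  define X where "X = max X0 1"
  have X: "X > 0" by (simp add: X_def)
  have Xh: "nubar \<nu> (y/2) \<le> 3/2 * nubar \<nu> y" if "y \<ge> X" for y
  proof -
    have "y > 0" "y \<ge> X0" using that by (auto simp: X_def)
    then have "nubar \<nu> ((1/2) * y) / nubar \<nu> y < 3/2" "nubar \<nu> y > 0" using X0 pos by auto
    then show ?thesis by (simp add: divide_less_eq)
  qed
  have PsiB: "Psi y \<le> Psi (2*X) + 3 * y * nubar \<nu> y" if "y \<ge> X" for y
    by (rule Psi_bound[where X=X]) (rule X, erule Xh, rule that)
  have yLinf: "filterlim (\<lambda>y. y * nubar \<nu> y) at_top at_top"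
    by (rule yL_lim[where X=X]) (rule X, erule Xh, erule pos)
  show ?thesis
  proof (rule tendstoI)
    fix e :: real assume e: "e > 0"
    define d where "d = min e 1"
    have d: "0 < d" "d \<le> 1" "d \<le> e" using e by (auto simp: d_def)
    define s where "s = 4 / d"
    have s: "s > 0" using d by (simp add: s_def)
    have es: "exp (- s) < d / 4"
    proof -
      have "s < exp s" using exp_ge_add_one_self[of s] by linarith
      then have "1 / exp s < 1 / s" using s by (intro divide_strict_left_mono) auto
      then show ?thesis by (simp add: s_def exp_minus inverse_eq_divide)
    qed
    define \<epsilon> where "\<epsilon> = d / 12"
    have eps: "\<epsilon> > 0" using d by (simp add: \<epsilon>_def)
    define C where "C = \<beta> + Psi (2 * X)"
    have ev1: "eventually (\<lambda>y. nubar \<nu> (s * y) / nubar \<nu> y > 1 - d/4) at_top"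
      by (rule order_tendstoD(1)[OF svc[OF s]]) (use d in simp)
    have ev2: "eventually (\<lambda>y. nubar \<nu> (\<epsilon> * y) / nubar \<nu> y < 1 + d/4) at_top"
      by (rule order_tendstoD(2)[OF svc[OF eps]]) (use d in simp)
    have lim0: "((\<lambda>y. C * inverse (y * nubar \<nu> y)) \<longlongrightarrow> C * 0) at_top"
      by (intro tendsto_intros tendsto_inverse_0_at_top yLinf)
    have ev3: "eventually (\<lambda>y. C * inverse (y * nubar \<nu> y) < d/4) at_top"
      by (rule order_tendstoD(2)[OF lim0]) (use d in simp)
    have ev4: "eventually (\<lambda>y. y \<ge> max 1 (X / \<epsilon>)) at_top" by (rule eventually_ge_at_top)
    show "eventually (\<lambda>y. dist (Phi \<beta> \<nu> (1 / y) / nubar \<nu> y) 1 < e) at_top"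
      using ev1 ev2 ev3 ev4
    proof eventually_elim
      case (elim y)
      have y: "y > 0" using elim by simp
      have Ly: "nubar \<nu> y > 0" using pos[OF y] .
      have Phi_y: "Phi \<beta> \<nu> (1 / y) = \<beta> * (1 / y) + Dn (1 / y)" by (rule Phi_eq)
      have b0: "\<beta> * (1 / y) \<ge> 0" using beta_nonneg y by simp
      define \<rho> where "\<rho> = nubar \<nu> (s * y) / nubar \<nu> y"
      have lo1: "(1 - exp (- s)) * nubar \<nu> (s * y) \<le> Phi \<beta> \<nu> (1 / y)"
        using lower[OF y s] Phi_y b0 by linarith
      have lo2: "(1 - exp (- s)) * \<rho> \<le> Phi \<beta> \<nu> (1 / y) / nubar \<nu> y"
        using divide_right_mono[OF lo1 less_imp_le[OF Ly]] by (simp add: \<rho>_def)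
      have r1: "1 - d/4 < \<rho>" using elim by (simp add: \<rho>_def)
      have r2: "1 - d/4 < 1 - exp (- s)" using es by linarith
      have r3: "0 < 1 - exp (- s)" using s by simp
      have r4: "0 \<le> 1 - d/4" using d by simp
      have "(1 - d/4) * (1 - d/4) < (1 - exp (- s)) * \<rho>"
        by (rule mult_strict_mono[OF r2 r1 r3 r4])
      moreover have "1 - d < (1 - d/4) * (1 - d/4)"
      proof -
        have "(1 - d/4) * (1 - d/4) = 1 - d/2 + (d*d)/16" by (simp add: algebra_simps)
        moreover have "0 \<le> d * d" by simp
        ultimately show ?thesis using d by linarith
      qed
      ultimately have LO: "1 - d < Phi \<beta> \<nu> (1 / y) / nubar \<nu> y" using lo2 by linarith
      define \<rho>' where "\<rho>' = nubar \<nu> (\<epsilon> * y) / nubar \<nu> y"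
      have ey: "\<epsilon> * y \<ge> X"
      proof -
        have "X / \<epsilon> \<le> y" using elim by simp
        then show ?thesis using eps by (simp add: field_simps)
      qed
      have up1: "Phi \<beta> \<nu> (1 / y) \<le> C / y + (1 + 3 * \<epsilon>) * nubar \<nu> (\<epsilon> * y)"
      proof -
        have "Dn (1 / y) \<le> nubar \<nu> (\<epsilon> * y) + (1 / y) * Psi (\<epsilon> * y)" by (rule upper[OF y eps])
        also have "(1 / y) * Psi (\<epsilon> * y) \<le> (1 / y) * (Psi (2 * X) + 3 * (\<epsilon> * y) * nubar \<nu> (\<epsilon> * y))"
          by (rule mult_left_mono[OF PsiB[OF ey]]) (use y in simp)
        also have "(1 / y) * (Psi (2 * X) + 3 * (\<epsilon> * y) * nubar \<nu> (\<epsilon> * y)) = Psi (2 * X) / y + 3 * \<epsilon> * nubar \<nu> (\<epsilon> * y)"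
          using y by (simp add: field_simps)
        finally show ?thesis using Phi_y y by (simp add: C_def field_simps)
      qed
      have up2: "Phi \<beta> \<nu> (1 / y) / nubar \<nu> y \<le> C * inverse (y * nubar \<nu> y) + (1 + 3 * \<epsilon>) * \<rho>'"
      proof -
        have "Phi \<beta> \<nu> (1 / y) / nubar \<nu> y \<le> (C / y + (1 + 3 * \<epsilon>) * nubar \<nu> (\<epsilon> * y)) / nubar \<nu> y"
          by (rule divide_right_mono[OF up1 less_imp_le[OF Ly]])
        also have "\<dots> = C * inverse (y * nubar \<nu> y) + (1 + 3 * \<epsilon>) * \<rho>'"
          using y Ly by (simp add: \<rho>'_def field_simps)
        finally show ?thesis .
      qed
      have u1: "1 + 3 * \<epsilon> \<le> 1 + d/4" by (simp add: \<epsilon>_def)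
      have u2: "\<rho>' \<le> 1 + d/4" using elim by (simp add: \<rho>'_def)
      have u3: "0 \<le> 1 + d/4" using d by simp
      have u4: "0 \<le> \<rho>'" unfolding \<rho>'_def using Ly nubar_nonneg[of "\<epsilon> * y"] by simp
      have "(1 + 3 * \<epsilon>) * \<rho>' \<le> (1 + d/4) * (1 + d/4)"
        by (rule mult_mono[OF u1 u2 u3 u4])
      moreover have "d/4 + (1 + d/4) * (1 + d/4) < 1 + d"
      proof -
        have "d/4 + (1 + d/4) * (1 + d/4) = 1 + 3*d/4 + (d*d)/16" by (simp add: algebra_simps)
        moreover have "d * d \<le> d * 1" by (rule mult_left_mono) (use d in auto)
        ultimately show ?thesis using d by linarith
      qed
      ultimately have UP: "Phi \<beta> \<nu> (1 / y) / nubar \<nu> y < 1 + d" using up2 elim by linarith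
      show ?case using LO UP d by (simp add: dist_real_def abs_less_iff)
    qed
  qed
qed

lemma part3:
  assumes b: "b \<noteq> 0" and sv: "slowly_varying (nubar \<nu>)"
  shows "deriv (Hfun b \<beta> \<nu>) \<sim>[at_top] (\<lambda>x. nubar \<nu> (exp x) / \<bar>b\<bar>)"
proof (rule asymp_equivI')
  have lim: "((\<lambda>x. Phi \<beta> \<nu> (1 / exp x) / nubar \<nu> (exp x)) \<longlongrightarrow> 1) at_top"
    using filterlim_compose[OF ratio_lim[OF sv] exp_at_top] by (simp add: o_def)
  have eq: "deriv (Hfun b \<beta> \<nu>) x / (nubar \<nu> (exp x) / \<bar>b\<bar>) = Phi \<beta> \<nu> (1 / exp x) / nubar \<nu> (exp x)" for x
    using DERIV_imp_deriv[OF H_deriv[of b x]] b by (simp add: exp_minus inverse_eq_divide)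
  show "((\<lambda>x. deriv (Hfun b \<beta> \<nu>) x / (nubar \<nu> (exp x) / \<bar>b\<bar>)) \<longlongrightarrow> 1) at_top"
    unfolding eq by (rule lim)
qed

end

theorem proposition1:
  fixes b \<beta> :: real and \<nu> :: "real measure"
  assumes beta_nonneg: "\<beta> \<ge> 0"
    and nu_sets: "sets \<nu> = sets borel"
    and nu_support: "emeasure \<nu> {..0} = 0"
    and nu_sigma: "sigma_finite_measure \<nu>"
    and nu_int: "(\<integral>\<^sup>+ z. ennreal (min 1 z) \<partial>\<nu>) < \<infinity>"
    and Phi_pos: "\<And>q. q > 0 \<Longrightarrow> Phi \<beta> \<nu> q > 0"
    and b_ne: "b \<noteq> 0"
    and H_infty: "filterlim (Hfun b \<beta> \<nu>) at_top at_top"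
  shows "(Hfun b \<beta> \<nu> \<sim>[at_top] (\<lambda>x. (1 / \<bar>b\<bar>) * (LBINT u=1..exp x. nubar \<nu> u / u)))
    \<and> (\<forall>x\<ge>0. (Hfun b \<beta> \<nu> has_real_derivative Phi \<beta> \<nu> (exp (- x)) / \<bar>b\<bar>) (at x))
    \<and> (slowly_varying (nubar \<nu>) \<longrightarrow>
           deriv (Hfun b \<beta> \<nu>) \<sim>[at_top] (\<lambda>x. nubar \<nu> (exp x) / \<bar>b\<bar>))"
proof -
  interpret nuctx \<beta> \<nu>
    by unfold_locales (use beta_nonneg nu_sets nu_support nu_int in auto)
  show ?thesis using part1[OF b_ne H_infty] H_deriv part3[OF b_ne] by blast
qed


end
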